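(* In the single-hop model described in the context, with $q:=P(SIR_1<\beta)$, $$P_s\ \ge\ P\big(SIR_{D+1}\ge\beta\ \big|\ SIR_1<\beta,\dots,SIR_D<\beta\big)\cdot\frac{1-(pq+1-p)^{D+1}}{1-q}$$ (for $D=0$ the conditional probability is the unconditional $P(SIR_1\ge\beta)$).
   Context: Single-hop model. Fix $\alpha>2$, $\beta>0$, $d>0$, $p\in(0,1]$, $\lambda>0$ and an integer $D\ge 0$. Let $\Phi$ be a homogeneous Poisson point process on $\mathbb{R}^2$ of intensity $\lambda$ (the same realization in every time slot); the typical receiver is at the origin and its transmitter at distance $d$. For each time slot $t\in\{1,2,\dots\}$ and each $x\in\Phi$ let $\mathbf 1_{x,t}\sim\mathrm{Bernoulli}(p)$, $G_{x,t}\sim\mathrm{Exp}(1)$, $H_t\sim\mathrm{Exp}(1)$, and $A_t\sim\mathrm{Bernoulli}(p)$, all mutually independent and independent of $\Phi$. Define $SIR_t:=\dfrac{d^{-\alpha}H_t}{\sum_{x\in\Phi}\mathbf 1_{x,t}|x|^{-\alpha}G_{x,t}}$ and $P_s:=P(\exists\, t\le D+1:\ A_t=1,\ SIR_t\ge\beta)$. *)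

theory Defs
  imports "HOL-Probability.Probability"
begin

text \<open>The points of the Poisson process are given by an (a.s. injective) enumeration
  X n, so that Phi(w) = range (\<lambda>n. X n w).  Marks are indexed by (point index, slot).\<close>

definition pp_count :: "(nat \<Rightarrow> 'a \<Rightarrow> real \<times> real) \<Rightarrow> (real \<times> real) set \<Rightarrow> 'a \<Rightarrow> nat" where
  "pp_count X B w = card {n. X n w \<in> B}"

definition poisson_pp :: "'a measure \<Rightarrow> real \<Rightarrow> (nat \<Rightarrow> 'a \<Rightarrow> real \<times> real) \<Rightarrow> bool" where
  "poisson_pp M lam X \<longleftrightarrow>
     (\<forall>n. X n \<in> borel_measurable M) \<and>
     (AE w in M. inj (\<lambda>n. X n w)) \<and>
     (\<forall>B. B \<in> sets borel \<and> bounded B \<longrightarrow>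
        pp_count X B \<in> measurable M (count_space UNIV) \<and>
        (\<forall>k. measure M {w \<in> space M. pp_count X B w = k} =
              exp (- (lam * measure lborel B)) * (lam * measure lborel B) ^ k / fact k)) \<and>
     (\<forall>(m::nat) B. (\<forall>i<m. B i \<in> sets borel \<and> bounded (B i)) \<and> disjoint_family_on B {..<m} \<longrightarrow>
        prob_space.indep_vars M (\<lambda>_. count_space UNIV) (\<lambda>i w. pp_count X (B i) w) {..<m})"

definition gen_events :: "'a measure \<Rightarrow> 'b measure \<Rightarrow> ('a \<Rightarrow> 'b) \<Rightarrow> 'a set set" where
  "gen_events M N f = {f -` B \<inter> space M | B. B \<in> sets N}"

datatype rv_idx = Proc | IndI nat nat | GI nat nat | HI nat | AI nat

text \<open>The single-hop model: Ind n t = indicator 1_{x,t}, G n t = fading G_{x,t} for the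
  point x = X n; H t, A t as in the paper.  All mutually independent and independent of Phi.\<close>
definition single_hop_model ::
  "'a measure \<Rightarrow> real \<Rightarrow> real \<Rightarrow> (nat \<Rightarrow> 'a \<Rightarrow> real \<times> real) \<Rightarrow> (nat \<Rightarrow> nat \<Rightarrow> 'a \<Rightarrow> bool)
   \<Rightarrow> (nat \<Rightarrow> nat \<Rightarrow> 'a \<Rightarrow> real) \<Rightarrow> (nat \<Rightarrow> 'a \<Rightarrow> real) \<Rightarrow> (nat \<Rightarrow> 'a \<Rightarrow> bool) \<Rightarrow> bool" where
  "single_hop_model M lam p X Ind G H A \<longleftrightarrow>
     prob_space M \<and> poisson_pp M lam X \<and>
     (\<lambda>w n. X n w) \<in> measurable M (PiM UNIV (\<lambda>_. borel)) \<and>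
     (\<forall>n t. distr M (count_space UNIV) (Ind n t) = measure_pmf (bernoulli_pmf p)) \<and>
     (\<forall>n t. distributed M lborel (G n t) (\<lambda>x. ennreal (exponential_density 1 x))) \<and>
     (\<forall>t. distributed M lborel (H t) (\<lambda>x. ennreal (exponential_density 1 x))) \<and>
     (\<forall>t. distr M (count_space UNIV) (A t) = measure_pmf (bernoulli_pmf p)) \<and>
     (\<forall>n t. Ind n t \<in> measurable M (count_space UNIV)) \<and>
     (\<forall>t. A t \<in> measurable M (count_space UNIV)) \<and>
     prob_space.indep_sets M
       (\<lambda>i. case i of
          Proc \<Rightarrow> gen_events M (PiM UNIV (\<lambda>_. borel)) (\<lambda>w n. X n w)
        | IndI n t \<Rightarrow> gen_events M (count_space UNIV) (Ind n t)
        | GI n t \<Rightarrow> gen_events M borel (G n t)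
        | HI t \<Rightarrow> gen_events M borel (H t)
        | AI t \<Rightarrow> gen_events M (count_space UNIV) (A t)) UNIV"

definition interference ::
  "real \<Rightarrow> (nat \<Rightarrow> 'a \<Rightarrow> real \<times> real) \<Rightarrow> (nat \<Rightarrow> nat \<Rightarrow> 'a \<Rightarrow> bool) \<Rightarrow> (nat \<Rightarrow> nat \<Rightarrow> 'a \<Rightarrow> real)
   \<Rightarrow> nat \<Rightarrow> 'a \<Rightarrow> ennreal" where
  "interference \<alpha> X Ind G t w =
     (\<Sum>n. ennreal (if Ind n t w then norm (X n w) powr (- \<alpha>) * G n t w else 0))"

definition SIR ::
  "real \<Rightarrow> real \<Rightarrow> (nat \<Rightarrow> 'a \<Rightarrow> real \<times> real) \<Rightarrow> (nat \<Rightarrow> nat \<Rightarrow> 'a \<Rightarrow> bool) \<Rightarrow> (nat \<Rightarrow> nat \<Rightarrow> 'a \<Rightarrow> real)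
   \<Rightarrow> (nat \<Rightarrow> 'a \<Rightarrow> real) \<Rightarrow> nat \<Rightarrow> 'a \<Rightarrow> ennreal" where
  "SIR \<alpha> d X Ind G H t w = ennreal (d powr (- \<alpha>) * H t w) / interference \<alpha> X Ind G t w"

end

theory Submission
  imports Defs
begin


context prob_space begin

lemma bint: assumes "f \<in> borel_measurable M" "\<And>x. x \<in> space M \<Longrightarrow> \<bar>f x\<bar> \<le> B"
  shows "integrable M (f::_\<Rightarrow>real)"
  using assms by (intro integrable_const_bound[where B=B]) auto

lemma lin4: "integrable M a \<Longrightarrow> integrable M b \<Longrightarrow> integrable M c \<Longrightarrow> integrable M e \<Longrightarrow>
  (\<integral>x. a x - u * b x - v * c x + w * e x \<partial>M) = (\<integral>x. a x \<partial>M) - u * (\<integral>x. b x \<partial>M) - v * (\<integral>x. c x \<partial>M) + w * (\<integral>x. e x \<partial>M)"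
  for a b c e :: "'a \<Rightarrow> real"
  by (simp add: integrable_diff integrable_add integral_add integral_diff)

lemma real_part:
  fixes Q :: "'a \<Rightarrow> real" and p :: real and D :: nat
  assumes Qm[measurable]: "Q \<in> borel_measurable M"
    and Q01: "\<And>x. x \<in> space M \<Longrightarrow> 0 \<le> Q x \<and> Q x \<le> 1"
    and p: "0 < p" "p \<le> 1"
  shows "1 - (\<integral>x. (1 - p + p * Q x)^(D+1) \<partial>M) \<ge>
     (\<integral>x. (1 - Q x) * Q x ^ D \<partial>M) / (\<integral>x. Q x ^ D \<partial>M) *
       (1 - (p * (\<integral>x. Q x \<partial>M) + 1 - p)^(D+1)) / (1 - (\<integral>x. Q x \<partial>M))"
proof -
  define m where "m i = (\<integral>x. Q x ^ i \<partial>M)" for i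
  define q where "q = (\<integral>x. Q x \<partial>M)"
  have intQ: "integrable M (\<lambda>x. f (Q x))" if "f \<in> borel_measurable borel" "\<And>y. 0 \<le> y \<Longrightarrow> y \<le> 1 \<Longrightarrow> \<bar>f y\<bar> \<le> B" for f :: "real \<Rightarrow> real" and B :: real
    using Q01 that by (intro integrable_const_bound[where B=B]) (auto intro: measurable_compose[OF Qm that(1)])
  have ipow: "integrable M (\<lambda>x. Q x ^ i)" for i
    by (rule intQ[of "\<lambda>y. y^i" 1, simplified]) (auto intro!: power_le_one)
  have ipow': "integrable M (\<lambda>x. Q x * Q x ^ i)" for i
    using ipow[of "Suc i"] by simp
  have m1: "m 1 = q" by (simp add: m_def q_def)
  have m0: "m 0 = 1" by (simp add: m_def prob_space)
  have mnn: "m i \<ge> 0" for i unfolding m_def using Q01 by (intro integral_nonneg_AE) auto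
  have mmono: "m (Suc i) \<le> m i" for i unfolding m_def
    using Q01 by (intro integral_mono ipow) (auto intro!: mult_left_le_one_le simp: )
  have q01: "0 \<le> q" "q \<le> 1" using mnn[of 1] mmono[of 0] m1 m0 by auto
  have G: "m (i+n+1) - k * m (i+n) - k^n * m (i+1) + k^(n+1) * m i \<ge> 0" if k: "0 \<le> k" "k \<le> 1" for i n k
  proof -
    have "0 \<le> (\<integral>x. Q x ^ i * ((Q x - k) * (Q x ^ n - k ^ n)) \<partial>M)"
    proof (intro integral_nonneg_AE AE_I2)
      fix x assume "x \<in> space M"
      then have "0 \<le> Q x" using Q01 by auto
      have "0 \<le> (Q x - k) * (Q x ^ n - k ^ n)"
      proof (cases "Q x \<le> k")
        case True then have "Q x ^ n \<le> k ^ n" using \<open>0 \<le> Q x\<close> by (intro power_mono) auto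
        then show ?thesis using True by (intro mult_nonpos_nonpos) auto
      next
        case False then have "k ^ n \<le> Q x ^ n" using k by (intro power_mono) auto
        then show ?thesis using False by (intro mult_nonneg_nonneg) auto
      qed
      then show "0 \<le> Q x ^ i * ((Q x - k) * (Q x ^ n - k ^ n))" using \<open>0 \<le> Q x\<close> by simp
    qed
    also have "(\<lambda>x. Q x ^ i * ((Q x - k) * (Q x ^ n - k ^ n))) =
       (\<lambda>x. Q x ^ (i+n+1) - k * Q x ^ (i+n) - k^n * Q x ^ (i+1) + k^(n+1) * Q x ^ i)"
      by (auto simp: algebra_simps power_add)
    also have "(\<integral>x. Q x ^ (i+n+1) - k * Q x ^ (i+n) - k^n * Q x ^ (i+1) + k^(n+1) * Q x ^ i \<partial>M)
       = m (i+n+1) - k * m (i+n) - k^n * m (i+1) + k^(n+1) * m i"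
      unfolding m_def by (rule lin4) (auto intro: ipow ipow')
    finally show ?thesis .
  qed
  have mq: "m (Suc n) \<ge> q * m n" for n
    using G[of q 0 n] q01 m0 m1 by (simp add: algebra_simps)
  have mqp: "m n \<ge> q ^ n" for n
  proof (induction n)
    case (Suc n) then show ?case using mq[of n] q01 mult_left_mono[OF Suc.IH, of q] by simp
  qed (simp add: m0)
  have ratio: "m (D+1) * m i \<ge> m (i+1) * m D" if "i \<le> D" for i
  proof (cases "m i = 0")
    case True
    then have "m (i+1) = 0" using mmono[of i] mnn[of "i+1"] by simp
    then show ?thesis using True by simp
  next
    case False
    then have mi: "m i > 0" using mnn[of i] by simp
    define k where "k = m (i+1) / m i"
    have k: "0 \<le> k" "k \<le> 1" using mi mnn[of "i+1"] mmono[of i] by (auto simp: k_def)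
    have km: "k * m i = m (i+1)" using mi by (simp add: k_def)
    have e: "k^(D-i+1) * m i = k^(D-i) * m (i+1)" using km by (simp add: mult.assoc)
    have "i + (D - i) = D" using that by simp
    then have "m (D+1) - k * m D - k^(D-i) * m (i+1) + k^(D-i+1) * m i \<ge> 0"
      using G[OF k, of i "D - i"] by simp
    then have "m (D+1) - k * m D \<ge> 0" unfolding e by simp
    then have "m (D+1) * m i \<ge> k * m i * m D" using mi by (simp add: algebra_simps)
    then show ?thesis using km by simp
  qed
  define y where "y = p * q + 1 - p"
  have pq: "0 \<le> p * q" "p * q \<le> p" using q01 p by (auto intro: mult_left_le_one_le)
  have y01: "0 \<le> y" "y \<le> 1" using pq p unfolding y_def by auto
  have xb: "0 \<le> 1 - p + p * t" "1 - p + p * t \<le> 1" if "0 \<le> t" "t \<le> 1" for t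
  proof -
    have "0 \<le> p * t" "p * t \<le> p" using that p by (auto intro: mult_left_le_one_le)
    then show "0 \<le> 1 - p + p * t" "1 - p + p * t \<le> 1" using p by auto
  qed
  have bnd: "\<bar>(1 - t) * (1 - p + p * t) ^ j * t ^ i\<bar> \<le> 1" if "0 \<le> t" "t \<le> 1" for t j i
  proof -
    have "0 \<le> (1 - t) * (1 - p + p * t) ^ j * t ^ i" using that xb[OF that] by simp
    moreover have "(1 - t) * (1 - p + p * t) ^ j * t ^ i \<le> 1"
      using that xb[OF that] by (intro mult_le_one power_le_one) auto
    ultimately show ?thesis by simp
  qed
  have iF: "integrable M (\<lambda>x. (1 - Q x) * (1 - p + p * Q x) ^ j * Q x ^ i)" for j i
    by (rule intQ[of "\<lambda>t. (1 - t) * (1 - p + p * t) ^ j * t ^ i" 1, simplified]) (auto intro: bnd)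
  have iX: "integrable M (\<lambda>x. (1 - p + p * Q x) ^ j)" for j
    by (rule intQ[of "\<lambda>t. (1 - p + p * t) ^ j" 1, simplified])
       (use xb in \<open>auto intro!: power_le_one simp: abs_le_iff\<close>)
  have Xle: "(\<integral>x. (1 - p + p * Q x)^(D+1) \<partial>M) \<le> 1"
  proof -
    have "(\<integral>x. (1 - p + p * Q x)^(D+1) \<partial>M) \<le> (\<integral>x. 1 \<partial>M)"
    proof (intro integral_mono iX)
      fix x assume "x \<in> space M"
      then show "(1 - p + p * Q x)^(D+1) \<le> 1" using Q01 xb by (intro power_le_one) auto
    qed auto
    then show ?thesis by (simp add: prob_space)
  qed
  show ?thesis
  proof (cases "m D = 0 \<or> q = 1")
    case True
    then show ?thesis using Xle unfolding m_def q_def by auto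
  next
    case False
    then have mD: "m D > 0" and q1: "q < 1" using mnn[of D] q01 by auto
    define c where "c = (m D - m (D+1)) / m D"
    have c0: "c \<ge> 0" unfolding c_def using mD mmono[of D] by simp
    have base: "m i - m (i+1) \<ge> c * q ^ i" if "i \<le> D" for i
    proof -
      have "(m D - m (D+1)) * m i \<le> (m i - m (i+1)) * m D"
        using ratio[OF that] by (simp add: algebra_simps)
      then have "c * m i \<le> m i - m (i+1)" unfolding c_def using mD
        by (simp add: field_simps)
      moreover have "c * q ^ i \<le> c * m i" using c0 mqp[of i] by (intro mult_left_mono)
      ultimately show ?thesis by simp
    qed
    have step: "\<forall>i. i + j \<le> D \<longrightarrow> (\<integral>x. (1 - Q x) * (1 - p + p * Q x) ^ j * Q x ^ i \<partial>M) \<ge> c * y ^ j * q ^ i" for j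
    proof (induction j)
      case 0
      show ?case
      proof (intro allI impI)
        fix i assume "i + 0 \<le> D"
        have "(\<integral>x. (1 - Q x) * (1 - p + p * Q x) ^ 0 * Q x ^ i \<partial>M) = (\<integral>x. Q x ^ i - Q x ^ (i+1) \<partial>M)"
          by (intro Bochner_Integration.integral_cong) (auto simp: algebra_simps)
        also have "\<dots> = m i - m (i+1)" unfolding m_def by (intro Bochner_Integration.integral_diff ipow)
        finally show "(\<integral>x. (1 - Q x) * (1 - p + p * Q x) ^ 0 * Q x ^ i \<partial>M) \<ge> c * y ^ 0 * q ^ i"
          using base[of i] \<open>i + 0 \<le> D\<close> by simp
      qed
    next
      case (Suc j)
      show ?case
      proof (intro allI impI)
        fix i assume i: "i + Suc j \<le> D"
        have "(\<integral>x. (1 - Q x) * (1 - p + p * Q x) ^ Suc j * Q x ^ i \<partial>M) =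
          (\<integral>x. (1 - p) * ((1 - Q x) * (1 - p + p * Q x) ^ j * Q x ^ i) + p * ((1 - Q x) * (1 - p + p * Q x) ^ j * Q x ^ (i+1)) \<partial>M)"
          by (intro Bochner_Integration.integral_cong) (auto simp: algebra_simps)
        also have "\<dots> = (1 - p) * (\<integral>x. (1 - Q x) * (1 - p + p * Q x) ^ j * Q x ^ i \<partial>M) + p * (\<integral>x. (1 - Q x) * (1 - p + p * Q x) ^ j * Q x ^ (i+1) \<partial>M)"
          using iF[of j i] iF[of j "i+1"]
          by (simp only: Bochner_Integration.integral_add integrable_mult_right integral_mult_right_zero)
        also have "\<dots> \<ge> (1 - p) * (c * y ^ j * q ^ i) + p * (c * y ^ j * q ^ (i+1))"
          using Suc.IH[rule_format, of i] Suc.IH[rule_format, of "i+1"] i p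
          by (intro add_mono mult_left_mono) auto
        moreover have "(1 - p) * (c * y ^ j * q ^ i) + p * (c * y ^ j * q ^ (i+1)) = c * y ^ Suc j * q ^ i"
          unfolding y_def by (simp add: algebra_simps)
        ultimately show "(\<integral>x. (1 - Q x) * (1 - p + p * Q x) ^ Suc j * Q x ^ i \<partial>M) \<ge> c * y ^ Suc j * q ^ i"
          by simp
      qed
    qed
    have "1 - (\<integral>x. (1 - p + p * Q x)^(D+1) \<partial>M) = (\<integral>x. 1 - (1 - p + p * Q x)^(D+1) \<partial>M)"
      using iX[of "D+1"] by (subst Bochner_Integration.integral_diff) (auto simp: prob_space simp del: power_Suc)
    also have "\<dots> = (\<integral>x. (\<Sum>j<D+1. p * ((1 - Q x) * (1 - p + p * Q x) ^ j * Q x ^ 0)) \<partial>M)"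
    proof (intro Bochner_Integration.integral_cong refl)
      fix x
      have e1: "1 - (1 - p + p * Q x)^(D+1) = (1 - (1 - p + p * Q x)) * (\<Sum>j<D+1. (1 - p + p * Q x)^j)"
        by (rule one_diff_power_eq)
      have e2: "1 - (1 - p + p * Q x) = p * (1 - Q x)" by (simp add: algebra_simps)
      show "1 - (1 - p + p * Q x)^(D+1) = (\<Sum>j<D+1. p * ((1 - Q x) * (1 - p + p * Q x) ^ j * Q x ^ 0))"
        unfolding e1 e2 by (simp add: sum_distrib_left mult.assoc del: power_Suc sum.lessThan_Suc)
    qed
    also have "\<dots> = (\<Sum>j<D+1. p * (\<integral>x. (1 - Q x) * (1 - p + p * Q x) ^ j * Q x ^ 0 \<partial>M))"
      by (subst Bochner_Integration.integral_sum) (use iF[of _ 0] in \<open>auto intro!: integrable_mult_right simp del: sum.lessThan_Suc\<close>)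
    also have "\<dots> \<ge> (\<Sum>j<D+1. p * (c * y ^ j * q ^ 0))"
    proof (rule sum_mono)
      fix j assume "j \<in> {..<D+1}"
      then show "p * (c * y ^ j * q ^ 0) \<le> p * (\<integral>x. (1 - Q x) * (1 - p + p * Q x) ^ j * Q x ^ 0 \<partial>M)"
        using step[of j, rule_format, of 0] p by (intro mult_left_mono) auto
    qed
    moreover have "(\<Sum>j<D+1. p * (c * y ^ j * q ^ 0)) = c * (1 - y ^ (D+1)) / (1 - q)"
    proof -
      define S where "S = (\<Sum>j<D+1. y ^ j)"
      have "1 - y ^ (D+1) = (1 - y) * S" unfolding S_def by (rule one_diff_power_eq)
      also have "1 - y = p * (1 - q)" unfolding y_def by (simp add: algebra_simps)
      finally have e: "c * (1 - y ^ (D+1)) / (1 - q) = c * p * S" using q1 by simp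
      have "(\<Sum>j<D+1. p * (c * y ^ j * q ^ 0)) = c * p * S" unfolding S_def
        by (simp add: sum_distrib_left mult_ac del: sum.lessThan_Suc power_Suc)
      then show ?thesis using e by simp
    qed
    moreover have "(\<integral>x. (1 - Q x) * Q x ^ D \<partial>M) = m D - m (D+1)"
    proof -
      have "(\<integral>x. (1 - Q x) * Q x ^ D \<partial>M) = (\<integral>x. Q x ^ D - Q x ^ (D+1) \<partial>M)"
        by (intro Bochner_Integration.integral_cong) (auto simp: algebra_simps)
      also have "\<dots> = m D - m (D+1)" unfolding m_def by (intro Bochner_Integration.integral_diff ipow)
      finally show ?thesis .
    qed
    ultimately show ?thesis unfolding c_def y_def q_def m_def by simp
  qed
qed
end



fun slot :: "rv_idx \<Rightarrow> nat option" where
  "slot Proc = None" | "slot (IndI n t) = Some t" | "slot (GI n t) = Some t"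
| "slot (HI t) = Some t" | "slot (AI t) = Some t"

fun shift :: "nat \<Rightarrow> rv_idx \<Rightarrow> rv_idx" where
  "shift t Proc = Proc" | "shift t (IndI n s) = IndI n t" | "shift t (GI n s) = GI n t"
| "shift t (HI s) = HI t" | "shift t (AI s) = AI t"

definition I0 :: "rv_idx set" where
  "I0 = insert (HI 0) (range (\<lambda>n. IndI n 0) \<union> range (\<lambda>n. GI n 0))"

lemma I0_mem[simp]: "HI 0 \<in> I0" "IndI n 0 \<in> I0" "GI n 0 \<in> I0"
  by (auto simp: I0_def)

lemma inj_shift: "inj_on (shift t) I0"
  by (auto simp: inj_on_def I0_def)

lemma slot_shift: "j \<in> I0 \<Longrightarrow> slot (shift t j) = Some t"
  by (auto simp: I0_def)

lemma gen_events_Int_stable: "Int_stable (gen_events M N f)"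
  unfolding Int_stable_def
proof (intro ballI)
  fix a b assume "a \<in> gen_events M N f" "b \<in> gen_events M N f"
  then obtain B B' where "a = f -` B \<inter> space M" "B \<in> sets N" "b = f -` B' \<inter> space M" "B' \<in> sets N"
    unfolding gen_events_def by auto
  then show "a \<inter> b \<in> gen_events M N f" unfolding gen_events_def
    by (intro CollectI exI[of _ "B \<inter> B'"]) auto
qed

lemma gen_events_Pow: "gen_events M N f \<subseteq> Pow (space M)"
  unfolding gen_events_def by auto


lemma (in prob_space) indep_nn_integral:
  assumes rv: "random_variable N1 U" "random_variable N2 W"
    and eq: "distr M N1 U \<Otimes>\<^sub>M distr M N2 W = distr M (N1 \<Otimes>\<^sub>M N2) (\<lambda>x. (U x, W x))"
    and k[measurable]: "k \<in> borel_measurable (N1 \<Otimes>\<^sub>M N2)"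
  shows "(\<integral>\<^sup>+w. k (U w, W w) \<partial>M) = (\<integral>\<^sup>+u. \<integral>\<^sup>+v. k (u, v) \<partial>distr M N2 W \<partial>distr M N1 U)"
proof -
  interpret W: prob_space "distr M N2 W" by (rule prob_space_distr) fact
  have "(\<integral>\<^sup>+w. k (U w, W w) \<partial>M) = (\<integral>\<^sup>+x. k x \<partial>distr M (N1 \<Otimes>\<^sub>M N2) (\<lambda>x. (U x, W x)))"
    using rv by (subst nn_integral_distr) (auto intro: measurable_Pair)
  also have "\<dots> = (\<integral>\<^sup>+x. k x \<partial>(distr M N1 U \<Otimes>\<^sub>M distr M N2 W))" unfolding eq ..
  also have "\<dots> = (\<integral>\<^sup>+u. \<integral>\<^sup>+v. k (u, v) \<partial>distr M N2 W \<partial>distr M N1 U)"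
    by (rule W.nn_integral_fst[symmetric]) (simp add: measurable_cong_sets[OF sets_pair_measure_cong[OF sets_distr sets_distr]])
  finally show ?thesis .
qed


lemma (in prob_space) indep_sets_reindex:
  assumes ind: "indep_sets F UNIV" and inj: "inj_on f I"
  shows "indep_sets (\<lambda>i. F (f i)) I"
  unfolding indep_sets_def
proof (intro conjI ballI allI impI)
  fix i assume "i \<in> I"
  then show "F (f i) \<subseteq> events" using ind unfolding indep_sets_def by auto
next
  fix J Af assume J: "J \<subseteq> I" "J \<noteq> {}" "finite J" and Af: "Af \<in> (\<Pi> j\<in>J. F (f j))"
  define B where "B k = Af (the_inv_into J f k)" for k
  have injJ: "inj_on f J" by (rule inj_on_subset[OF inj J(1)])
  have Bf: "B (f j) = Af j" if "j \<in> J" for j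
    unfolding B_def using the_inv_into_f_f[OF injJ that] by simp
  have BP: "\<forall>k\<in>f ` J. B k \<in> F k" using Af Bf by auto
  have "prob (\<Inter>k\<in>f ` J. B k) = (\<Prod>k\<in>f ` J. prob (B k))"
    using indep_setsD[OF ind, of "f ` J" B] J BP by simp
  moreover have "(\<Inter>k\<in>f ` J. B k) = (\<Inter>j\<in>J. Af j)" using Bf by auto
  moreover have "(\<Prod>k\<in>f ` J. prob (B k)) = (\<Prod>j\<in>J. prob (Af j))"
    using Bf by (simp add: prod.reindex[OF injJ])
  ultimately show "prob (\<Inter>j\<in>J. Af j) = (\<Prod>j\<in>J. prob (Af j))" by simp
qed

locale shm = prob_space M for M :: "'a measure" +
  fixes lam p :: real and X :: "nat \<Rightarrow> 'a \<Rightarrow> real \<times> real"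
    and Ind :: "nat \<Rightarrow> nat \<Rightarrow> 'a \<Rightarrow> bool" and G :: "nat \<Rightarrow> nat \<Rightarrow> 'a \<Rightarrow> real"
    and H :: "nat \<Rightarrow> 'a \<Rightarrow> real" and A :: "nat \<Rightarrow> 'a \<Rightarrow> bool"
  assumes model: "single_hop_model M lam p X Ind G H A"
begin

definition EV :: "rv_idx \<Rightarrow> 'a set set" where
  "EV = (\<lambda>i. case i of
          Proc \<Rightarrow> gen_events M (PiM UNIV (\<lambda>_. borel)) (\<lambda>w n. X n w)
        | IndI n t \<Rightarrow> gen_events M (count_space UNIV) (Ind n t)
        | GI n t \<Rightarrow> gen_events M borel (G n t)
        | HI t \<Rightarrow> gen_events M borel (H t)
        | AI t \<Rightarrow> gen_events M (count_space UNIV) (A t))"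

lemma indep_EV: "indep_sets EV UNIV"
  using model unfolding single_hop_model_def EV_def by auto

lemma EV_events: "EV j \<subseteq> events"
  using indep_EV unfolding indep_sets_def by auto

lemma EV_Pow: "EV j \<subseteq> Pow (space M)"
  unfolding EV_def by (cases j) (auto simp: gen_events_Pow)

lemma EV_Int_stable: "Int_stable (EV j)"
  unfolding EV_def by (cases j) (auto simp: gen_events_Int_stable)

lemma Xi_meas[measurable]: "(\<lambda>w n. X n w) \<in> measurable M (PiM UNIV (\<lambda>_. borel))"
  using model unfolding single_hop_model_def by auto

lemma Ind_meas[measurable]: "Ind n t \<in> measurable M (count_space UNIV)"
  using model unfolding single_hop_model_def by auto

lemma A_meas[measurable]: "A t \<in> measurable M (count_space UNIV)"
  using model unfolding single_hop_model_def by auto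

lemma G_distr: "distributed M lborel (G n t) (\<lambda>x. ennreal (exponential_density 1 x))"
  using model unfolding single_hop_model_def by auto

lemma H_distr: "distributed M lborel (H t) (\<lambda>x. ennreal (exponential_density 1 x))"
  using model unfolding single_hop_model_def by auto

lemma G_meas[measurable]: "G n t \<in> borel_measurable M"
  using G_distr[of n t] unfolding distributed_def by (simp add: measurable_lborel2)

lemma H_meas[measurable]: "H t \<in> borel_measurable M"
  using H_distr[of t] unfolding distributed_def by (simp add: measurable_lborel2)

definition SG :: "rv_idx set \<Rightarrow> 'a measure" where
  "SG S = sigma (space M) (\<Union>j\<in>S. EV j)"

lemma space_SG[simp]: "space (SG S) = space M"
  unfolding SG_def by (rule space_measure_of) (use EV_Pow in auto)

lemma sets_SG: "sets (SG S) = sigma_sets (space M) (\<Union>j\<in>S. EV j)"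
  unfolding SG_def by (rule sets_measure_of) (use EV_Pow in auto)

lemma sets_SG_sub: "sets (SG S) \<subseteq> sets M"
  unfolding sets_SG using EV_events by (intro sets.sigma_sets_subset) auto

lemma SG_meas: "f \<in> measurable (SG S) N \<Longrightarrow> f \<in> measurable M N"
  using measurable_mono[of N N "SG S" M] sets_SG_sub by auto

lemma EV_SG: "j \<in> S \<Longrightarrow> EV j \<subseteq> sets (SG S)"
  unfolding sets_SG by auto

lemma indep_SG:
  assumes "S \<inter> S' = {}" "a \<in> sets (SG S)" "b \<in> sets (SG S')"
  shows "prob (a \<inter> b) = prob a * prob b"
proof -
  let ?I = "case_bool S S'"
  have ind: "indep_sets (\<lambda>b. sigma_sets (space M) (\<Union>i\<in>?I b. EV i)) UNIV"
  proof (rule indep_sets_collect_sigma)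
    show "indep_sets EV (\<Union>j\<in>UNIV. ?I j)" by (rule indep_sets_mono_index[OF _ indep_EV]) auto
    show "Int_stable (EV i)" for i by (rule EV_Int_stable)
    show "disjoint_family_on ?I UNIV" using assms(1)
      by (auto simp: disjoint_family_on_def split: bool.split)
  qed
  have "indep_set (sets (SG S)) (sets (SG S'))"
    unfolding indep_set_def sets_SG
    by (rule indep_sets_cong[THEN iffD1, OF refl _ ind]) (auto split: bool.split)
  then show ?thesis using assms(2,3) unfolding indep_sets2_eq by blast
qed

lemma SG_pair:
  assumes "S \<inter> S' = {}" and f: "f \<in> measurable (SG S) N" and g: "g \<in> measurable (SG S') N'"
  shows "distr M N f \<Otimes>\<^sub>M distr M N' g = distr M (N \<Otimes>\<^sub>M N') (\<lambda>x. (f x, g x))"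
proof -
  have rvs: "random_variable N f" "random_variable N' g" using f g by (auto intro: SG_meas)
  then have XY: "random_variable (N \<Otimes>\<^sub>M N') (\<lambda>x. (f x, g x))"
    by (rule measurable_Pair)
  interpret X: prob_space "distr M N f" by (rule prob_space_distr) fact
  interpret Y: prob_space "distr M N' g" by (rule prob_space_distr) fact
  interpret XY: pair_prob_space "distr M N f" "distr M N' g" ..
  show ?thesis
  proof (rule pair_measure_eqI)
    show "sigma_finite_measure (distr M N f)" ..
    show "sigma_finite_measure (distr M N' g)" ..
    fix A B assume A: "A \<in> sets (distr M N f)" and B: "B \<in> sets (distr M N' g)"
    have "emeasure (distr M (N \<Otimes>\<^sub>M N') (\<lambda>x. (f x, g x))) (A \<times> B) = emeasure M ((\<lambda>x. (f x, g x)) -` (A \<times> B) \<inter> space M)"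
      using A B by (intro emeasure_distr[OF XY]) auto
    also have "(\<lambda>x. (f x, g x)) -` (A \<times> B) \<inter> space M = (f -` A \<inter> space M) \<inter> (g -` B \<inter> space M)" by auto
    also have "emeasure M \<dots> = emeasure M (f -` A \<inter> space M) * emeasure M (g -` B \<inter> space M)"
    proof -
      have a: "f -` A \<inter> space M \<in> sets (SG S)" using f A by (auto simp: measurable_def)
      have b: "g -` B \<inter> space M \<in> sets (SG S')" using g B by (auto simp: measurable_def)
      show ?thesis using indep_SG[OF assms(1) a b]
        by (simp add: emeasure_eq_measure measure_nonneg ennreal_mult)
    qed
    also have "\<dots> = emeasure (distr M N f) A * emeasure (distr M N' g) B"
      using rvs A B by (simp add: emeasure_distr)
    finally show "emeasure (distr M N f) A * emeasure (distr M N' g) B = emeasure (distr M (N \<Otimes>\<^sub>M N') (\<lambda>x. (f x, g x))) (A \<times> B)" by simp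
  qed simp
qed


definition val :: "rv_idx \<Rightarrow> 'a \<Rightarrow> real" where
  "val j w = (case j of Proc \<Rightarrow> 0 | IndI n t \<Rightarrow> of_bool (Ind n t w) | GI n t \<Rightarrow> G n t w
     | HI t \<Rightarrow> H t w | AI t \<Rightarrow> of_bool (A t w))"

lemma val_EV: "j \<noteq> Proc \<Longrightarrow> B \<in> sets borel \<Longrightarrow> val j -` B \<inter> space M \<in> EV j"
proof (cases j)
  case (IndI n t)
  then show ?thesis unfolding EV_def gen_events_def val_def
    by (auto intro!: exI[of _ "of_bool -` B"])
next
  case (AI t)
  then show ?thesis unfolding EV_def gen_events_def val_def
    by (auto intro!: exI[of _ "of_bool -` B"])
qed (auto simp: EV_def gen_events_def val_def)

lemma val_meas[measurable]: "val j \<in> borel_measurable M"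
  unfolding val_def by (cases j) auto

lemma val_SG: "j \<in> S \<Longrightarrow> j \<noteq> Proc \<Longrightarrow> val j \<in> borel_measurable (SG S)"
  unfolding measurable_def using val_EV EV_SG by (auto intro: subsetD[OF EV_SG])

definition Phsp :: "(nat \<Rightarrow> real \<times> real) measure" where
  "Phsp = PiM UNIV (\<lambda>_. borel)"

definition Xi :: "'a \<Rightarrow> nat \<Rightarrow> real \<times> real" where
  "Xi w = (\<lambda>n. X n w)"

lemma Xi_M[measurable]: "Xi \<in> measurable M Phsp"
  unfolding Xi_def Phsp_def by (rule Xi_meas)

lemma Xi_SG: "Proc \<in> S \<Longrightarrow> Xi \<in> measurable (SG S) Phsp"
  unfolding measurable_def using measurable_space[OF Xi_M] EV_SG[of Proc S]
  unfolding Xi_def Phsp_def by (auto simp: EV_def gen_events_def)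

lemma A_SG: "AI t \<in> S \<Longrightarrow> A t \<in> measurable (SG S) (count_space UNIV)"
  unfolding measurable_def using EV_SG[of "AI t" S]
  by (auto simp: EV_def gen_events_def)

definition Vsp :: "(rv_idx \<Rightarrow> real) measure" where
  "Vsp = PiM I0 (\<lambda>_. borel)"

definition V :: "nat \<Rightarrow> 'a \<Rightarrow> rv_idx \<Rightarrow> real" where
  "V t w = (\<lambda>j\<in>I0. val (shift t j) w)"

lemma V_SG: "(\<And>j. j \<in> I0 \<Longrightarrow> shift t j \<in> S) \<Longrightarrow> V t \<in> measurable (SG S) Vsp"
  unfolding V_def Vsp_def
  by (intro measurable_restrict val_SG) (auto simp: I0_def)

lemma V_M[measurable]: "V t \<in> measurable M Vsp"
  unfolding V_def Vsp_def by (intro measurable_restrict val_meas)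

definition Zsp :: "((rv_idx \<Rightarrow> real) \<times> bool) measure" where
  "Zsp = Vsp \<Otimes>\<^sub>M count_space UNIV"

definition Z :: "nat \<Rightarrow> 'a \<Rightarrow> (rv_idx \<Rightarrow> real) \<times> bool" where
  "Z t w = (V t w, A t w)"

definition slotS :: "nat \<Rightarrow> rv_idx set" where
  "slotS t = {j. slot j = Some t}"

lemma Z_SG: "slotS t \<subseteq> S \<Longrightarrow> Z t \<in> measurable (SG S) Zsp"
  unfolding Z_def Zsp_def
  by (intro measurable_Pair V_SG A_SG) (auto simp: slotS_def slot_shift)

lemma Z_M[measurable]: "Z t \<in> measurable M Zsp"
  unfolding Z_def Zsp_def by measurable

lemma slotS_disj: "s \<noteq> t \<Longrightarrow> slotS s \<inter> slotS t = {}" "Proc \<notin> slotS t"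
  by (auto simp: slotS_def)

lemma h_meas_T:
  fixes h :: "'i \<Rightarrow> (nat \<Rightarrow> real \<times> real) \<Rightarrow> (rv_idx \<Rightarrow> real) \<times> bool \<Rightarrow> ennreal"
  assumes h: "\<And>s. s \<in> T \<Longrightarrow> case_prod (h s) \<in> borel_measurable (Phsp \<Otimes>\<^sub>M Zsp)"
    and "finite T"
  shows "(\<lambda>x. \<Prod>s\<in>T. h s (fst x) (snd x s)) \<in> borel_measurable (Phsp \<Otimes>\<^sub>M PiM T (\<lambda>_. Zsp))"
proof (rule borel_measurable_prod_ennreal[where f="\<lambda>s x. h s (fst x) (snd x s)"])
  fix s assume s: "s \<in> T"
  have "(\<lambda>x. (fst x, snd x s)) \<in> measurable (Phsp \<Otimes>\<^sub>M PiM T (\<lambda>_. Zsp)) (Phsp \<Otimes>\<^sub>M Zsp)"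
    using s by (intro measurable_Pair measurable_fst'' measurable_snd'') (auto intro!: measurable_component_singleton)
  from measurable_compose[OF this h[OF s]]
  show "(\<lambda>x. h s (fst x) (snd x s)) \<in> borel_measurable (Phsp \<Otimes>\<^sub>M PiM T (\<lambda>_. Zsp))" by simp
qed

lemma prod_formula:
  fixes h :: "nat \<Rightarrow> (nat \<Rightarrow> real \<times> real) \<Rightarrow> (rv_idx \<Rightarrow> real) \<times> bool \<Rightarrow> ennreal"
  assumes "finite T"
    and h: "\<And>t. t \<in> T \<Longrightarrow> case_prod (h t) \<in> borel_measurable (Phsp \<Otimes>\<^sub>M Zsp)"
  shows "\<psi> \<in> borel_measurable Phsp \<Longrightarrow>
    (\<integral>\<^sup>+w. \<psi> (Xi w) * (\<Prod>t\<in>T. h t (Xi w) (Z t w)) \<partial>M) =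
    (\<integral>\<^sup>+\<phi>. \<psi> \<phi> * (\<Prod>t\<in>T. \<integral>\<^sup>+z. h t \<phi> z \<partial>distr M Zsp (Z t)) \<partial>distr M Phsp Xi)"
  using assms
proof (induction T arbitrary: \<psi> rule: finite_induct)
  case empty
  then show ?case by (simp add: nn_integral_distr)
next
  case (insert t T)
  note psi[measurable] = insert.prems(1)
  have hT: "\<And>s. s \<in> T \<Longrightarrow> case_prod (h s) \<in> borel_measurable (Phsp \<Otimes>\<^sub>M Zsp)"
    using insert.prems(2) by auto
  have ht[measurable]: "case_prod (h t) \<in> borel_measurable (Phsp \<Otimes>\<^sub>M Zsp)"
    using insert.prems(2) by auto
  define N1 where "N1 = Phsp \<Otimes>\<^sub>M PiM T (\<lambda>_. Zsp)"
  define U where "U w = (Xi w, \<lambda>s\<in>T. Z s w)" for w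
  define S where "S = insert Proc (\<Union>s\<in>T. slotS s)"
  have U_SG: "U \<in> measurable (SG S) N1"
    unfolding U_def N1_def S_def
    by (intro measurable_Pair Xi_SG measurable_restrict Z_SG) auto
  have indep: "distr M N1 U \<Otimes>\<^sub>M distr M Zsp (Z t) = distr M (N1 \<Otimes>\<^sub>M Zsp) (\<lambda>x. (U x, Z t x))"
  proof (rule SG_pair[OF _ U_SG Z_SG[OF order_refl]])
    show "S \<inter> slotS t = {}" using insert.hyps(2) by (auto simp: S_def slotS_def)
  qed
  interpret Zt: prob_space "distr M Zsp (Z t)" by (rule prob_space_distr[OF Z_M])
  have PT[measurable]: "(\<lambda>x. \<Prod>s\<in>T. h s (fst x) (snd x s)) \<in> borel_measurable N1"
    unfolding N1_def by (rule h_meas_T[OF hT insert.hyps(1)])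
  define k where "k x = \<psi> (fst (fst x)) * (\<Prod>s\<in>T. h s (fst (fst x)) (snd (fst x) s)) * h t (fst (fst x)) (snd x)" for x
  have k[measurable]: "k \<in> borel_measurable (N1 \<Otimes>\<^sub>M Zsp)"
  proof -
    have a: "(\<lambda>x. \<Prod>s\<in>T. h s (fst (fst x)) (snd (fst x) s)) \<in> borel_measurable (N1 \<Otimes>\<^sub>M Zsp)"
      using measurable_compose[OF measurable_fst PT] by simp
    have b: "(\<lambda>x. h t (fst (fst x)) (snd x)) \<in> borel_measurable (N1 \<Otimes>\<^sub>M Zsp)"
    proof -
      have "(\<lambda>x. (fst (fst x), snd x)) \<in> measurable (N1 \<Otimes>\<^sub>M Zsp) (Phsp \<Otimes>\<^sub>M Zsp)"
        unfolding N1_def by (intro measurable_Pair measurable_fst'[OF measurable_fst] measurable_snd)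
      from measurable_compose[OF this ht] show ?thesis by simp
    qed
    have c: "(\<lambda>x. \<psi> (fst (fst x))) \<in> borel_measurable (N1 \<Otimes>\<^sub>M Zsp)"
      unfolding N1_def by (rule measurable_compose[OF measurable_fst'[OF measurable_fst] psi])
    show ?thesis unfolding k_def by (intro borel_measurable_times_ennreal a b c)
  qed
  define psi' where "psi' \<phi> = \<psi> \<phi> * (\<integral>\<^sup>+z. h t \<phi> z \<partial>distr M Zsp (Z t))" for \<phi>
  have psi'[measurable]: "psi' \<in> borel_measurable Phsp"
  proof -
    have "(\<lambda>\<phi>. \<integral>\<^sup>+z. h t \<phi> z \<partial>distr M Zsp (Z t)) \<in> borel_measurable Phsp"
      by (rule Zt.borel_measurable_nn_integral) (simp add: measurable_cong_sets[OF sets_pair_measure_cong[OF refl sets_distr]])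
    then show ?thesis unfolding psi'_def by (intro borel_measurable_times_ennreal psi)
  qed
  have "(\<integral>\<^sup>+w. \<psi> (Xi w) * (\<Prod>s\<in>insert t T. h s (Xi w) (Z s w)) \<partial>M) = (\<integral>\<^sup>+w. k (U w, Z t w) \<partial>M)"
    using insert.hyps by (intro nn_integral_cong) (simp add: k_def U_def mult_ac)
  also have "\<dots> = (\<integral>\<^sup>+u. \<integral>\<^sup>+z. k (u, z) \<partial>distr M Zsp (Z t) \<partial>distr M N1 U)"
    using indep_nn_integral[OF SG_meas[OF U_SG] Z_M indep k] .
  also have "\<dots> = (\<integral>\<^sup>+u. psi' (fst u) * (\<Prod>s\<in>T. h s (fst u) (snd u s)) \<partial>distr M N1 U)"
  proof (rule nn_integral_cong)
    fix u assume u: "u \<in> space (distr M N1 U)"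
    have "(\<lambda>z. h t (fst u) z) \<in> borel_measurable (distr M Zsp (Z t))"
      using u unfolding N1_def by (simp add: space_pair_measure)
    then have "(\<integral>\<^sup>+z. (\<psi> (fst u) * (\<Prod>s\<in>T. h s (fst u) (snd u s))) * h t (fst u) z \<partial>distr M Zsp (Z t))
      = (\<psi> (fst u) * (\<Prod>s\<in>T. h s (fst u) (snd u s))) * (\<integral>\<^sup>+z. h t (fst u) z \<partial>distr M Zsp (Z t))"
      by (rule nn_integral_cmult)
    then show "(\<integral>\<^sup>+z. k (u, z) \<partial>distr M Zsp (Z t)) = psi' (fst u) * (\<Prod>s\<in>T. h s (fst u) (snd u s))"
      unfolding k_def psi'_def by (simp add: mult_ac)
  qed
  also have "\<dots> = (\<integral>\<^sup>+w. psi' (Xi w) * (\<Prod>s\<in>T. h s (Xi w) (Z s w)) \<partial>M)"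
  proof -
    have UM: "U \<in> measurable M N1" by (rule SG_meas[OF U_SG])
    have "(\<lambda>u. psi' (fst u) * (\<Prod>s\<in>T. h s (fst u) (snd u s))) \<in> borel_measurable N1"
      using PT by (intro borel_measurable_times_ennreal measurable_compose[OF measurable_fst'[OF measurable_ident_sets[OF refl]] psi']) (simp_all add: N1_def)
    then show ?thesis using UM
      by (subst nn_integral_distr) (auto simp: U_def intro!: nn_integral_cong)
  qed
  also have "\<dots> = (\<integral>\<^sup>+\<phi>. psi' \<phi> * (\<Prod>s\<in>T. \<integral>\<^sup>+z. h s \<phi> z \<partial>distr M Zsp (Z s)) \<partial>distr M Phsp Xi)"
    by (rule insert.IH[OF psi' hT])
  also have "\<dots> = (\<integral>\<^sup>+\<phi>. \<psi> \<phi> * (\<Prod>s\<in>insert t T. \<integral>\<^sup>+z. h s \<phi> z \<partial>distr M Zsp (Z s)) \<partial>distr M Phsp Xi)"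
    using insert.hyps by (simp add: psi'_def mult_ac)
  finally show ?case .
qed



lemma val_shift: "val (HI t) = H t" "val (IndI n t) = (\<lambda>w. of_bool (Ind n t w))"
  "val (GI n t) = G n t"
  by (auto simp: val_def fun_eq_iff)

lemma marg_eq: "j \<in> I0 \<Longrightarrow> distr M borel (val (shift t j)) = distr M borel (val (shift s j))"
proof -
  have dH: "distr M borel (H t) = density lborel (\<lambda>x. ennreal (exponential_density 1 x))" for t
  proof -
    have "distr M borel (H t) = distr M lborel (H t)" by (rule distr_cong) auto
    then show ?thesis using H_distr[of t] unfolding distributed_def by simp
  qed
  have dG: "distr M borel (G n t) = density lborel (\<lambda>x. ennreal (exponential_density 1 x))" for n t
  proof -
    have "distr M borel (G n t) = distr M lborel (G n t)" by (rule distr_cong) auto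
    then show ?thesis using G_distr[of n t] unfolding distributed_def by simp
  qed
  have dI: "distr M borel (\<lambda>w. of_bool (Ind n t w) :: real) = distr (measure_pmf (bernoulli_pmf p)) borel of_bool" for n t
  proof -
    have "distr (distr M (count_space UNIV) (Ind n t)) borel (of_bool :: bool \<Rightarrow> real) = distr M borel (of_bool \<circ> Ind n t)"
      by (rule distr_distr) auto
    moreover have "distr M (count_space UNIV) (Ind n t) = measure_pmf (bernoulli_pmf p)"
      using model unfolding single_hop_model_def by auto
    ultimately show ?thesis by (simp add: comp_def)
  qed
  assume "j \<in> I0"
  then show ?thesis unfolding I0_def using dH dG dI by (auto simp: val_shift)
qed

lemma indep_coords: "indep_vars (\<lambda>_. borel) (\<lambda>j. val (shift t j)) I0"
  unfolding indep_vars_def2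
proof
  show "\<forall>i\<in>I0. random_variable borel (val (shift t i))" by simp
  have "indep_sets (\<lambda>i. EV (shift t i)) I0"
    by (rule indep_sets_reindex[OF indep_EV inj_shift])
  then show "indep_sets (\<lambda>i. {val (shift t i) -` A \<inter> space M |A. A \<in> sets borel}) I0"
  proof (rule indep_sets_mono_sets)
    fix i assume "i \<in> I0"
    then have "shift t i \<noteq> Proc" by (auto simp: I0_def)
    then show "{val (shift t i) -` A \<inter> space M |A. A \<in> sets borel} \<subseteq> EV (shift t i)"
      using val_EV by auto
  qed
qed

lemma law_V: "distr M Vsp (V t) = PiM I0 (\<lambda>j. distr M borel (val (shift t j)))"
proof -
  have "I0 \<noteq> {}" by (auto simp: I0_def)
  from indep_vars_iff_distr_eq_PiM[OF this, where M'="\<lambda>_. borel" and X="\<lambda>j. val (shift t j)"] indep_coords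
  show ?thesis unfolding Vsp_def V_def by simp
qed

lemma law_V_eq: "distr M Vsp (V t) = distr M Vsp (V s)"
  unfolding law_V by (intro PiM_cong refl marg_eq)

lemma law_A: "distr M (count_space UNIV) (A t) = measure_pmf (bernoulli_pmf p)"
  using model unfolding single_hop_model_def by auto

lemma law_Z: "distr M Zsp (Z t) = distr M Vsp (V t) \<Otimes>\<^sub>M measure_pmf (bernoulli_pmf p)"
proof -
  have "distr M Vsp (V t) \<Otimes>\<^sub>M distr M (count_space UNIV) (A t) = distr M (Vsp \<Otimes>\<^sub>M count_space UNIV) (\<lambda>x. (V t x, A t x))"
  proof (rule SG_pair)
    show "(slotS t - {AI t}) \<inter> {AI t} = {}" by auto
    show "V t \<in> measurable (SG (slotS t - {AI t})) Vsp"
      by (rule V_SG) (auto simp: I0_def slotS_def)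
    show "A t \<in> measurable (SG {AI t}) (count_space UNIV)" by (rule A_SG) simp
  qed
  then show ?thesis unfolding law_A Zsp_def Z_def by simp
qed

definition Fok :: "real \<Rightarrow> real \<Rightarrow> real \<Rightarrow> (nat \<Rightarrow> real \<times> real) \<Rightarrow> (rv_idx \<Rightarrow> real) \<Rightarrow> bool" where
  "Fok \<alpha> \<beta> d \<phi> v \<longleftrightarrow> ennreal \<beta> \<le> ennreal (d powr (- \<alpha>) * v (HI 0)) /
     (\<Sum>n. ennreal (if v (IndI n 0) = 1 then norm (\<phi> n) powr (- \<alpha>) * v (GI n 0) else 0))"

lemma V_apply[simp]: "V t w (HI 0) = H t w" "V t w (IndI n 0) = of_bool (Ind n t w)" "V t w (GI n 0) = G n t w"
  by (simp_all add: V_def val_def)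

lemma ok_Fok: "w \<in> space M \<Longrightarrow> (SIR \<alpha> d X Ind G H t w \<ge> ennreal \<beta>) \<longleftrightarrow> Fok \<alpha> \<beta> d (Xi w) (V t w)"
  unfolding Fok_def SIR_def interference_def Xi_def
  by (simp cong: if_cong)

lemma Fok_meas: "{x \<in> space (Phsp \<Otimes>\<^sub>M Vsp). Fok \<alpha> \<beta> d (fst x) (snd x)} \<in> sets (Phsp \<Otimes>\<^sub>M Vsp)"
proof -
  have c: "(\<lambda>x. snd x j) \<in> borel_measurable (Phsp \<Otimes>\<^sub>M Vsp)" if "j \<in> I0" for j
    using that unfolding Vsp_def by (intro measurable_compose[OF measurable_snd measurable_component_singleton])
  have f: "(\<lambda>x. fst x n) \<in> borel_measurable (Phsp \<Otimes>\<^sub>M Vsp)" for n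
    unfolding Phsp_def by (intro measurable_compose[OF measurable_fst measurable_component_singleton]) auto
  have [measurable]: "(\<lambda>x. snd x (HI 0)) \<in> borel_measurable (Phsp \<Otimes>\<^sub>M Vsp)"
    "(\<lambda>x. snd x (IndI n 0)) \<in> borel_measurable (Phsp \<Otimes>\<^sub>M Vsp)"
    "(\<lambda>x. snd x (GI n 0)) \<in> borel_measurable (Phsp \<Otimes>\<^sub>M Vsp)"
    "(\<lambda>x. fst x n) \<in> borel_measurable (Phsp \<Otimes>\<^sub>M Vsp)" for n
    by (auto intro!: c f simp: I0_def)
  show ?thesis unfolding Fok_def by measurable
qed


lemma prob_formula:
  fixes R :: "nat \<Rightarrow> (nat \<Rightarrow> real \<times> real) \<Rightarrow> (rv_idx \<Rightarrow> real) \<times> bool \<Rightarrow> bool"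
    and g :: "nat \<Rightarrow> (nat \<Rightarrow> real \<times> real) \<Rightarrow> real"
  assumes T: "finite T"
    and Rm: "\<And>t. t \<in> T \<Longrightarrow> {x \<in> space (Phsp \<Otimes>\<^sub>M Zsp). R t (fst x) (snd x)} \<in> sets (Phsp \<Otimes>\<^sub>M Zsp)"
    and gR: "\<And>t \<phi>. t \<in> T \<Longrightarrow> \<phi> \<in> space Phsp \<Longrightarrow>
       emeasure (distr M Zsp (Z t)) {z \<in> space Zsp. R t \<phi> z} = ennreal (g t \<phi>)"
    and gm: "\<And>t. t \<in> T \<Longrightarrow> g t \<in> borel_measurable Phsp"
    and g01: "\<And>t \<phi>. t \<in> T \<Longrightarrow> \<phi> \<in> space Phsp \<Longrightarrow> 0 \<le> g t \<phi>"
  shows "{w \<in> space M. \<forall>t\<in>T. R t (Xi w) (Z t w)} \<in> events"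
    and "measure M {w \<in> space M. \<forall>t\<in>T. R t (Xi w) (Z t w)} = (\<integral>\<phi>. (\<Prod>t\<in>T. g t \<phi>) \<partial>distr M Phsp Xi)"
proof -
  have Rp: "Measurable.pred (Phsp \<Otimes>\<^sub>M Zsp) (\<lambda>x. R t (fst x) (snd x))" if "t \<in> T" for t
    using Rm[OF that] by (simp add: pred_def)
  have Rw: "Measurable.pred M (\<lambda>w. R t (Xi w) (Z t w))" if "t \<in> T" for t
    using measurable_compose[OF measurable_Pair[OF Xi_M Z_M] Rp[OF that]] by simp
  show ev: "{w \<in> space M. \<forall>t\<in>T. R t (Xi w) (Z t w)} \<in> events"
    using Rw T by measurable
  define h where "h t \<phi> z = (if R t \<phi> z then 1 else 0 :: ennreal)" for t \<phi> z
  have hm: "case_prod (h t) \<in> borel_measurable (Phsp \<Otimes>\<^sub>M Zsp)" if "t \<in> T" for t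
  proof -
    have "(\<lambda>x. h t (fst x) (snd x)) \<in> borel_measurable (Phsp \<Otimes>\<^sub>M Zsp)"
      unfolding h_def using Rp[OF that] by measurable
    then show ?thesis by (simp add: case_prod_beta')
  qed
  have prod01: "(\<Prod>t\<in>T. h t \<phi>' (z t)) = (if \<forall>t\<in>T. R t \<phi>' (z t) then 1 else 0)" for \<phi>' z
    using T by (induction T rule: finite_induct) (auto simp: h_def)
  have "emeasure M {w \<in> space M. \<forall>t\<in>T. R t (Xi w) (Z t w)} = (\<integral>\<^sup>+w. indicator {w \<in> space M. \<forall>t\<in>T. R t (Xi w) (Z t w)} w \<partial>M)"
    using ev by simp
  also have "\<dots> = (\<integral>\<^sup>+w. (\<lambda>_. 1) (Xi w) * (\<Prod>t\<in>T. h t (Xi w) (Z t w)) \<partial>M)"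
    by (intro nn_integral_cong) (simp add: prod01[of _ "\<lambda>t. Z t _", simplified] indicator_def)
  also have "\<dots> = (\<integral>\<^sup>+\<phi>. 1 * (\<Prod>t\<in>T. \<integral>\<^sup>+z. h t \<phi> z \<partial>distr M Zsp (Z t)) \<partial>distr M Phsp Xi)"
    by (rule prod_formula[OF T hm]) auto
  also have "\<dots> = (\<integral>\<^sup>+\<phi>. ennreal (\<Prod>t\<in>T. g t \<phi>) \<partial>distr M Phsp Xi)"
  proof (rule nn_integral_cong)
    fix \<phi> assume "\<phi> \<in> space (distr M Phsp Xi)"
    then have \<phi>: "\<phi> \<in> space Phsp" by simp
    have "(\<integral>\<^sup>+z. h t \<phi> z \<partial>distr M Zsp (Z t)) = ennreal (g t \<phi>)" if t: "t \<in> T" for t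
    proof -
      have S: "{z \<in> space Zsp. R t \<phi> z} \<in> sets Zsp"
        using measurable_compose[OF measurable_Pair1'[OF \<phi>] Rp[OF t]] by (simp add: pred_def)
      have "(\<integral>\<^sup>+z. h t \<phi> z \<partial>distr M Zsp (Z t)) = (\<integral>\<^sup>+z. indicator {z \<in> space Zsp. R t \<phi> z} z \<partial>distr M Zsp (Z t))"
        by (intro nn_integral_cong) (auto simp: h_def indicator_def)
      also have "\<dots> = emeasure (distr M Zsp (Z t)) {z \<in> space Zsp. R t \<phi> z}"
        using S by simp
      finally show ?thesis using gR[OF t \<phi>] by simp
    qed
    then show "1 * (\<Prod>t\<in>T. \<integral>\<^sup>+z. h t \<phi> z \<partial>distr M Zsp (Z t)) = ennreal (\<Prod>t\<in>T. g t \<phi>)"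
      using g01[OF _ \<phi>] by (simp add: prod_ennreal)
  qed
  finally have e: "emeasure M {w \<in> space M. \<forall>t\<in>T. R t (Xi w) (Z t w)} = (\<integral>\<^sup>+\<phi>. ennreal (\<Prod>t\<in>T. g t \<phi>) \<partial>distr M Phsp Xi)" .
  have "measure M {w \<in> space M. \<forall>t\<in>T. R t (Xi w) (Z t w)} = enn2real (\<integral>\<^sup>+\<phi>. ennreal (\<Prod>t\<in>T. g t \<phi>) \<partial>distr M Phsp Xi)"
    unfolding measure_def e ..
  also have "\<dots> = (\<integral>\<phi>. (\<Prod>t\<in>T. g t \<phi>) \<partial>distr M Phsp Xi)"
    using g01 gm by (intro enn2real_nn_integral_eq_integral) (auto intro!: prod_nonneg borel_measurable_prod)
  finally show "measure M {w \<in> space M. \<forall>t\<in>T. R t (Xi w) (Z t w)} = (\<integral>\<phi>. (\<Prod>t\<in>T. g t \<phi>) \<partial>distr M Phsp Xi)" .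
qed


lemma Fok_pred[measurable (raw)]:
  assumes "f \<in> measurable N Phsp" "g \<in> measurable N Vsp"
  shows "Measurable.pred N (\<lambda>x. Fok \<alpha> \<beta> d (f x) (g x))"
proof -
  have "Measurable.pred (Phsp \<Otimes>\<^sub>M Vsp) (\<lambda>x. Fok \<alpha> \<beta> d (fst x) (snd x))"
    using Fok_meas by (simp add: pred_def)
  from measurable_compose[OF measurable_Pair[OF assms] this] show ?thesis by simp
qed

definition mu :: "(rv_idx \<Rightarrow> real) measure" where
  "mu = distr M Vsp (V 1)"

lemma mu_prob: "prob_space mu"
  unfolding mu_def by (rule prob_space_distr) simp

lemma sets_mu[simp]: "sets mu = sets Vsp" and space_mu[simp]: "space mu = space Vsp"
  unfolding mu_def by auto

lemma law_Z': "distr M Zsp (Z t) = mu \<Otimes>\<^sub>M measure_pmf (bernoulli_pmf p)"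
  unfolding law_Z mu_def using law_V_eq[of t 1] by simp

definition Qf :: "real \<Rightarrow> real \<Rightarrow> real \<Rightarrow> (nat \<Rightarrow> real \<times> real) \<Rightarrow> real" where
  "Qf \<alpha> \<beta> d \<phi> = measure mu {v \<in> space Vsp. \<not> Fok \<alpha> \<beta> d \<phi> v}"

lemma Fset: "\<phi> \<in> space Phsp \<Longrightarrow> {v \<in> space Vsp. Fok \<alpha> \<beta> d \<phi> v} \<in> sets Vsp"
  "\<phi> \<in> space Phsp \<Longrightarrow> {v \<in> space Vsp. \<not> Fok \<alpha> \<beta> d \<phi> v} \<in> sets Vsp"
  by measurable

lemma Qf_meas: "Qf \<alpha> \<beta> d \<in> borel_measurable Phsp"
proof -
  interpret mu: prob_space mu by (rule mu_prob)
  define S where "S = {x \<in> space (Phsp \<Otimes>\<^sub>M Vsp). \<not> Fok \<alpha> \<beta> d (fst x) (snd x)}"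
  have S: "S \<in> sets (Phsp \<Otimes>\<^sub>M mu)" unfolding S_def
    by (subst sets_pair_measure_cong[OF refl sets_mu]) measurable
  have "(\<lambda>x. enn2real (emeasure mu (Pair x -` S))) \<in> borel_measurable Phsp"
    by (intro borel_measurable_enn2real mu.measurable_emeasure_Pair S)
  moreover have "Pair x -` S = {v \<in> space Vsp. \<not> Fok \<alpha> \<beta> d x v}" if "x \<in> space Phsp" for x
    using that by (auto simp: S_def space_pair_measure)
  ultimately show ?thesis unfolding Qf_def measure_def
    by (subst measurable_cong[where g="\<lambda>x. enn2real (emeasure mu (Pair x -` S))"]) auto
qed

lemma Qf01: "0 \<le> Qf \<alpha> \<beta> d \<phi>" "Qf \<alpha> \<beta> d \<phi> \<le> 1"
proof -
  interpret mu: prob_space mu by (rule mu_prob)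
  show "0 \<le> Qf \<alpha> \<beta> d \<phi>" "Qf \<alpha> \<beta> d \<phi> \<le> 1" unfolding Qf_def by auto
qed

lemma gN: "\<phi> \<in> space Phsp \<Longrightarrow> emeasure (distr M Zsp (Z t)) {z \<in> space Zsp. \<not> Fok \<alpha> \<beta> d \<phi> (fst z)} = ennreal (Qf \<alpha> \<beta> d \<phi>)"
proof -
  interpret mu: prob_space mu by (rule mu_prob)
  assume \<phi>: "\<phi> \<in> space Phsp"
  have "{z \<in> space Zsp. \<not> Fok \<alpha> \<beta> d \<phi> (fst z)} = {v \<in> space Vsp. \<not> Fok \<alpha> \<beta> d \<phi> v} \<times> UNIV"
    by (auto simp: Zsp_def space_pair_measure)
  then show ?thesis unfolding law_Z'
    using Fset(2)[OF \<phi>, of \<alpha> \<beta> d]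
    by (simp add: measure_pmf.emeasure_pair_measure_Times Qf_def mu.emeasure_eq_measure)
qed

lemma gY: "\<phi> \<in> space Phsp \<Longrightarrow> emeasure (distr M Zsp (Z t)) {z \<in> space Zsp. Fok \<alpha> \<beta> d \<phi> (fst z)} = ennreal (1 - Qf \<alpha> \<beta> d \<phi>)"
proof -
  interpret mu: prob_space mu by (rule mu_prob)
  assume \<phi>: "\<phi> \<in> space Phsp"
  have "{z \<in> space Zsp. Fok \<alpha> \<beta> d \<phi> (fst z)} = {v \<in> space Vsp. Fok \<alpha> \<beta> d \<phi> v} \<times> UNIV"
    by (auto simp: Zsp_def space_pair_measure)
  moreover have "{v \<in> space Vsp. \<not> Fok \<alpha> \<beta> d \<phi> v} = space mu - {v \<in> space Vsp. Fok \<alpha> \<beta> d \<phi> v}" by auto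
  moreover have "measure mu (space mu - {v \<in> space Vsp. Fok \<alpha> \<beta> d \<phi> v}) = 1 - measure mu {v \<in> space Vsp. Fok \<alpha> \<beta> d \<phi> v}"
    using Fset(1)[OF \<phi>, of \<alpha> \<beta> d] by (intro mu.prob_compl) simp
  ultimately show ?thesis unfolding law_Z'
    using Fset(1)[OF \<phi>, of \<alpha> \<beta> d]
    by (simp add: measure_pmf.emeasure_pair_measure_Times Qf_def mu.emeasure_eq_measure)
qed

lemma gS: "\<phi> \<in> space Phsp \<Longrightarrow> 0 \<le> p \<Longrightarrow> p \<le> 1 \<Longrightarrow>
  emeasure (distr M Zsp (Z t)) {z \<in> space Zsp. \<not> (snd z \<and> Fok \<alpha> \<beta> d \<phi> (fst z))} = ennreal (1 - p + p * Qf \<alpha> \<beta> d \<phi>)"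
proof -
  interpret mu: prob_space mu by (rule mu_prob)
  assume \<phi>: "\<phi> \<in> space Phsp" and p: "0 \<le> p" "p \<le> 1"
  define B where "B = {v \<in> space Vsp. Fok \<alpha> \<beta> d \<phi> v}"
  define Bc where "Bc = {v \<in> space Vsp. \<not> Fok \<alpha> \<beta> d \<phi> v}"
  have B: "B \<in> sets Vsp" "Bc \<in> sets Vsp" unfolding B_def Bc_def using Fset[OF \<phi>] by auto
  have eqs: "{z \<in> space Zsp. \<not> (snd z \<and> Fok \<alpha> \<beta> d \<phi> (fst z))} = Bc \<times> UNIV \<union> B \<times> {False}"
    by (auto simp: Zsp_def space_pair_measure B_def Bc_def)
  have "emeasure (mu \<Otimes>\<^sub>M measure_pmf (bernoulli_pmf p)) (Bc \<times> UNIV \<union> B \<times> {False})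
      = emeasure (mu \<Otimes>\<^sub>M measure_pmf (bernoulli_pmf p)) (Bc \<times> UNIV) + emeasure (mu \<Otimes>\<^sub>M measure_pmf (bernoulli_pmf p)) (B \<times> {False})"
    using B by (intro plus_emeasure[symmetric]) (auto simp: B_def Bc_def)
  also have "\<dots> = ennreal (measure mu Bc) + ennreal (measure mu B) * ennreal (1 - p)"
    using B p by (simp add: measure_pmf.emeasure_pair_measure_Times mu.emeasure_eq_measure emeasure_pmf_single)
  also have "measure mu B = 1 - measure mu Bc"
  proof -
    have "Bc = space mu - B" by (auto simp: B_def Bc_def)
    then show ?thesis using B mu.prob_compl[of B] by simp
  qed
  also have "ennreal (measure mu Bc) + ennreal (1 - measure mu Bc) * ennreal (1 - p) = ennreal (1 - p + p * measure mu Bc)"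
  proof -
    have q0: "0 \<le> measure mu Bc" "measure mu Bc \<le> 1" using mu.prob_le_1[of Bc] by auto
    have "ennreal (1 - measure mu Bc) * ennreal (1 - p) = ennreal ((1 - measure mu Bc) * (1 - p))"
      using q0 p by (simp add: ennreal_mult)
    moreover have "ennreal (measure mu Bc) + ennreal ((1 - measure mu Bc) * (1 - p)) = ennreal (measure mu Bc + (1 - measure mu Bc) * (1 - p))"
      using q0 p by (intro ennreal_plus[symmetric]) auto
    moreover have "measure mu Bc + (1 - measure mu Bc) * (1 - p) = 1 - p + p * measure mu Bc"
      by (simp add: algebra_simps)
    ultimately show ?thesis by simp
  qed
  finally show ?thesis unfolding law_Z' eqs Qf_def Bc_def .
qed

end



theorem proposition4:
  fixes M :: "'a measure" and \<alpha> \<beta> d p lam :: real and D :: nat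
    and X :: "nat \<Rightarrow> 'a \<Rightarrow> real \<times> real"
    and Ind :: "nat \<Rightarrow> nat \<Rightarrow> 'a \<Rightarrow> bool" and G :: "nat \<Rightarrow> nat \<Rightarrow> 'a \<Rightarrow> real"
    and H :: "nat \<Rightarrow> 'a \<Rightarrow> real" and A :: "nat \<Rightarrow> 'a \<Rightarrow> bool"
  assumes "\<alpha> > 2" and "\<beta> > 0" and "d > 0" and "0 < p" and "p \<le> 1" and "lam > 0"
    and model: "single_hop_model M lam p X Ind G H A"
  defines "ok \<equiv> \<lambda>t w. SIR \<alpha> d X Ind G H t w \<ge> ennreal \<beta>"
  defines "q \<equiv> measure M {w \<in> space M. \<not> ok 1 w}"
  defines "Ps \<equiv> measure M {w \<in> space M. \<exists>t\<in>{1..D+1}. A t w \<and> ok t w}"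
  defines "cond \<equiv> measure M {w \<in> space M. ok (D+1) w \<and> (\<forall>t\<in>{1..D}. \<not> ok t w)}
                   / measure M {w \<in> space M. \<forall>t\<in>{1..D}. \<not> ok t w}"
  shows "Ps \<ge> cond * (1 - (p * q + 1 - p) ^ (D + 1)) / (1 - q)"
proof -
  have pM: "prob_space M" using model unfolding single_hop_model_def by auto
  interpret shm M lam p X Ind G H A
    using pM model by (simp add: shm_def shm_axioms_def)
  define Q where "Q = Qf \<alpha> \<beta> d"
  define L where "L = distr M Phsp Xi"
  interpret L: prob_space L unfolding L_def by (rule prob_space_distr) simp
  have Qm: "Q \<in> borel_measurable L" unfolding Q_def L_def using Qf_meas by simp
  have Q01: "0 \<le> Q x \<and> Q x \<le> 1" for x unfolding Q_def using Qf01 by auto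
  have okF: "ok t w \<longleftrightarrow> Fok \<alpha> \<beta> d (Xi w) (fst (Z t w))" if "w \<in> space M" for t w
    using ok_Fok[OF that] unfolding ok_def Z_def by simp
  have fstZ: "(\<lambda>x. fst (snd x)) \<in> measurable (Phsp \<Otimes>\<^sub>M Zsp) Vsp"
    unfolding Zsp_def by measurable
  have sndZ: "(\<lambda>x. snd (snd x)) \<in> measurable (Phsp \<Otimes>\<^sub>M Zsp) (count_space UNIV)"
    unfolding Zsp_def by measurable
  have PN: "{x \<in> space (Phsp \<Otimes>\<^sub>M Zsp). \<not> Fok \<alpha> \<beta> d (fst x) (fst (snd x))} \<in> sets (Phsp \<Otimes>\<^sub>M Zsp)"
    using fstZ by measurable
  have PY: "{x \<in> space (Phsp \<Otimes>\<^sub>M Zsp). Fok \<alpha> \<beta> d (fst x) (fst (snd x))} \<in> sets (Phsp \<Otimes>\<^sub>M Zsp)"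
    using fstZ by measurable
  have PS: "{x \<in> space (Phsp \<Otimes>\<^sub>M Zsp). \<not> (snd (snd x) \<and> Fok \<alpha> \<beta> d (fst x) (fst (snd x)))} \<in> sets (Phsp \<Otimes>\<^sub>M Zsp)"
    using fstZ sndZ by measurable
  have Nf: "{w \<in> space M. \<forall>t\<in>T. \<not> Fok \<alpha> \<beta> d (Xi w) (fst (Z t w))} \<in> events"
    "measure M {w \<in> space M. \<forall>t\<in>T. \<not> Fok \<alpha> \<beta> d (Xi w) (fst (Z t w))} = (\<integral>\<phi>. (\<Prod>t\<in>T. Q \<phi>) \<partial>L)"
    if "finite T" for T
    using prob_formula[OF that, where R="\<lambda>t \<phi> z. \<not> Fok \<alpha> \<beta> d \<phi> (fst z)" and g="\<lambda>t. Q"]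
      PN gN Qf_meas Qf01 unfolding Q_def L_def by auto
  have hq: "q = (\<integral>\<phi>. Q \<phi> \<partial>L)"
  proof -
    have "{w \<in> space M. \<not> ok 1 w} = {w \<in> space M. \<forall>t\<in>{1}. \<not> Fok \<alpha> \<beta> d (Xi w) (fst (Z t w))}"
      using okF by auto
    then show ?thesis unfolding q_def using Nf(2)[of "{1}"] by simp
  qed
  have hden: "measure M {w \<in> space M. \<forall>t\<in>{1..D}. \<not> ok t w} = (\<integral>\<phi>. Q \<phi> ^ D \<partial>L)"
  proof -
    have "{w \<in> space M. \<forall>t\<in>{1..D}. \<not> ok t w} = {w \<in> space M. \<forall>t\<in>{1..D}. \<not> Fok \<alpha> \<beta> d (Xi w) (fst (Z t w))}"
      using okF by auto
    then show ?thesis using Nf(2)[of "{1..D}"] by simp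
  qed
  have hnum: "measure M {w \<in> space M. ok (D+1) w \<and> (\<forall>t\<in>{1..D}. \<not> ok t w)} = (\<integral>\<phi>. (1 - Q \<phi>) * Q \<phi> ^ D \<partial>L)"
  proof -
    define R where "R t \<phi> (z :: (rv_idx \<Rightarrow> real) \<times> bool) = (if t = D + 1 then Fok \<alpha> \<beta> d \<phi> (fst z) else \<not> Fok \<alpha> \<beta> d \<phi> (fst z))" for t \<phi> z
    define g where "g t = (if t = D + 1 then (\<lambda>\<phi>. 1 - Q \<phi>) else Q)" for t
    have "measure M {w \<in> space M. \<forall>t\<in>{1..D+1}. R t (Xi w) (Z t w)} = (\<integral>\<phi>. (\<Prod>t\<in>{1..D+1}. g t \<phi>) \<partial>L)"
    proof (rule prob_formula(2)[where R=R and g=g, unfolded L_def[symmetric]])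
      show "{x \<in> space (Phsp \<Otimes>\<^sub>M Zsp). R t (fst x) (snd x)} \<in> sets (Phsp \<Otimes>\<^sub>M Zsp)" for t
        using PN PY by (cases "t = D + 1") (simp_all add: R_def)
      show "emeasure (distr M Zsp (Z t)) {z \<in> space Zsp. R t \<phi> z} = ennreal (g t \<phi>)"
        if "\<phi> \<in> space Phsp" for t \<phi>
        using gN[OF that] gY[OF that] by (cases "t = D + 1") (simp_all add: R_def g_def Q_def)
      show "g t \<in> borel_measurable Phsp" for t
        using Qf_meas by (cases "t = D + 1") (simp_all add: g_def Q_def)
      show "0 \<le> g t \<phi>" for t \<phi>
        using Q01 by (cases "t = D + 1") (simp_all add: g_def)
    qed simp
    moreover have "{w \<in> space M. \<forall>t\<in>{1..D+1}. R t (Xi w) (Z t w)} = {w \<in> space M. ok (D+1) w \<and> (\<forall>t\<in>{1..D}. \<not> ok t w)}"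
      using okF by (auto simp: R_def)
    moreover have "(\<Prod>t\<in>{1..D+1}. g t \<phi>) = (1 - Q \<phi>) * Q \<phi> ^ D" for \<phi>
    proof -
      have "{1..D+1} = insert (D+1) {1..D}" by auto
      then have "(\<Prod>t\<in>{1..D+1}. g t \<phi>) = g (D+1) \<phi> * (\<Prod>t\<in>{1..D}. g t \<phi>)" by simp
      also have "(\<Prod>t\<in>{1..D}. g t \<phi>) = (\<Prod>t\<in>{1..D}. Q \<phi>)" by (intro prod.cong) (auto simp: g_def)
      finally show ?thesis by (simp add: g_def)
    qed
    ultimately show ?thesis by simp
  qed
  have hPs: "Ps = 1 - (\<integral>\<phi>. (1 - p + p * Q \<phi>) ^ (D+1) \<partial>L)"
  proof -
    define C where "C = {w \<in> space M. \<forall>t\<in>{1..D+1}. \<not> (snd (Z t w) \<and> Fok \<alpha> \<beta> d (Xi w) (fst (Z t w)))}"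
    have Cf: "C \<in> events" "measure M C = (\<integral>\<phi>. (\<Prod>t\<in>{1..D+1}. 1 - p + p * Q \<phi>) \<partial>L)"
      unfolding C_def
      using prob_formula[where T="{1..D+1}" and R="\<lambda>t \<phi> z. \<not> (snd z \<and> Fok \<alpha> \<beta> d \<phi> (fst z))" and g="\<lambda>t \<phi>. 1 - p + p * Q \<phi>"]
        PS gS \<open>0 < p\<close> \<open>p \<le> 1\<close> Qf_meas Q01 unfolding Q_def L_def
      by (auto intro!: add_nonneg_nonneg mult_nonneg_nonneg)
    have "{w \<in> space M. \<exists>t\<in>{1..D+1}. A t w \<and> ok t w} = space M - C"
      using okF by (auto simp: C_def Z_def)
    then have "Ps = 1 - measure M C" unfolding Ps_def using prob_compl[OF Cf(1)] by simp
    then show ?thesis using Cf(2) by simp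
  qed
  show ?thesis
    using L.real_part[OF Qm _ \<open>0 < p\<close> \<open>p \<le> 1\<close>, of D] Q01
    unfolding cond_def hnum hden hq hPs by simp
qed

end
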